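(* Let $B$ be a homology $d$-ball with vertex set $V$, and let $\sigma$ be an interior $(d-1)$-face of $B$ with $\partial\overline{\sigma}\subseteq\partial B$. Then the induced subcomplex $B[V\setminus\sigma]$ has exactly two connected components.
   Context: Fix a field $\mathbb{F}$; all homology is with coefficients in $\mathbb{F}$. For a simplicial complex $\Delta$ on vertex set $V$ and $W\subseteq V$, $\Delta[W]=\{\alpha\in\Delta:\alpha\subseteq W\}$. For a face $\sigma$, $\overline{\sigma}$ is the complex of all subsets of $\sigma$ and $\partial\overline\sigma$ the complex of its proper subsets. For a face $\sigma$ of $\Delta$, ${\rm lk}_\Delta(\sigma)=\{\tau\setminus\sigma:\sigma\subseteq\tau\in\Delta\}$. A $d$-dimensional simplicial complex $S$ is a homology $d$-sphere if for every face $\sigma$ of dimension $i\ge -1$, ${\rm lk}_S(\sigma)$ has the same $\mathbb{F}$-homology as the $(d-i-1)$-sphere. A $d$-dimensional simplicial complex $B$ is a homology $d$-ball if (i) $B$ has trivial reduced homology, (ii) for each face $\sigma$ of dimension $i\le d-1$ the reduced homology of ${\rm lk}_B(\sigma)$ is either trivial or that of the $(d-i-1)$-sphere, and (iii) the boundary $\partial B=\{\sigma\in B: -1<\dim\sigma<d,\ \widetilde H_{d-\dim\sigma-1}({\rm lk}_B(\sigma))=0\}\cup\{\emptyset\}$ is a homology $(d-1)$-sphere. An interior face of $B$ is a face not in $\partial B$. *)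

theory Defs
  imports Main
begin

text \<open>Vertices are linearly ordered,
  which fixes the orientation of simplices.\<close>

definition simplicial_complex :: "'v set set \<Rightarrow> bool" where
  "simplicial_complex \<Delta> \<longleftrightarrow> finite \<Delta> \<and> {} \<in> \<Delta> \<and> (\<forall>\<sigma>\<in>\<Delta>. finite \<sigma>)
     \<and> (\<forall>\<sigma>\<in>\<Delta>. \<forall>\<tau>. \<tau> \<subseteq> \<sigma> \<longrightarrow> \<tau> \<in> \<Delta>)"

definition vertices :: "'v set set \<Rightarrow> 'v set" where
  "vertices \<Delta> = {v. {v} \<in> \<Delta>}"

definition induced :: "'v set set \<Rightarrow> 'v set \<Rightarrow> 'v set set" where
  "induced \<Delta> W = {\<alpha> \<in> \<Delta>. \<alpha> \<subseteq> W}"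

definition link :: "'v set set \<Rightarrow> 'v set \<Rightarrow> 'v set set" where
  "link \<Delta> \<sigma> = {\<tau> - \<sigma> | \<tau>. \<tau> \<in> \<Delta> \<and> \<sigma> \<subseteq> \<tau>}"

definition fdim :: "'v set \<Rightarrow> int" where
  "fdim \<sigma> = int (card \<sigma>) - 1"

definition has_dim :: "'v set set \<Rightarrow> int \<Rightarrow> bool" where
  "has_dim \<Delta> d \<longleftrightarrow> (\<exists>\<sigma>\<in>\<Delta>. fdim \<sigma> = d) \<and> (\<forall>\<sigma>\<in>\<Delta>. fdim \<sigma> \<le> d)"

definition faces_of_dim :: "'v set set \<Rightarrow> int \<Rightarrow> 'v set set" where
  "faces_of_dim \<Delta> k = {\<sigma>\<in>\<Delta>. fdim \<sigma> = k}"

definition chains :: "'a itself \<Rightarrow> 'v set set \<Rightarrow> int \<Rightarrow> ('v set \<Rightarrow> 'a::field) set" where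
  "chains _ \<Delta> k = {f. \<forall>\<sigma>. \<sigma> \<notin> faces_of_dim \<Delta> k \<longrightarrow> f \<sigma> = 0}"

text \<open>Incidence sign of a codimension-one face \<tau> of \<sigma>: (-1)^(position of the
  removed vertex in the ordered simplex \<sigma>).\<close>

definition incidence :: "'v::linorder set \<Rightarrow> 'v set \<Rightarrow> 'a::field" where
  "incidence \<sigma> \<tau> = (- 1) ^ card {x \<in> \<tau>. x < (THE v. v \<in> \<sigma> - \<tau>)}"

definition boundary_map ::
  "'v::linorder set set \<Rightarrow> int \<Rightarrow> ('v set \<Rightarrow> 'a::field) \<Rightarrow> ('v set \<Rightarrow> 'a)" where
  "boundary_map \<Delta> k f = (\<lambda>\<tau>. if \<tau> \<in> faces_of_dim \<Delta> (k - 1)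
      then (\<Sum>\<sigma>\<in>{\<sigma>\<in>faces_of_dim \<Delta> k. \<tau> \<subseteq> \<sigma>}. incidence \<sigma> \<tau> * f \<sigma>) else 0)"

definition cycles :: "'a itself \<Rightarrow> 'v::linorder set set \<Rightarrow> int \<Rightarrow> ('v set \<Rightarrow> 'a::field) set" where
  "cycles A \<Delta> k = {f \<in> chains A \<Delta> k. boundary_map \<Delta> k f = (\<lambda>_. 0)}"

definition boundaries :: "'a itself \<Rightarrow> 'v::linorder set set \<Rightarrow> int \<Rightarrow> ('v set \<Rightarrow> 'a::field) set" where
  "boundaries A \<Delta> k = boundary_map \<Delta> (k + 1) ` chains A \<Delta> (k + 1)"

text \<open>Reduced homology is computed from the augmented chain complex, in which the
  empty face is the unique face of dimension -1.\<close>

definition red_hom_trivial :: "'a::field itself \<Rightarrow> 'v::linorder set set \<Rightarrow> int \<Rightarrow> bool" where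
  "red_hom_trivial A \<Delta> k \<longleftrightarrow> cycles A \<Delta> k = boundaries A \<Delta> k"

definition red_hom_is_field :: "'a::field itself \<Rightarrow> 'v::linorder set set \<Rightarrow> int \<Rightarrow> bool" where
  "red_hom_is_field A \<Delta> k \<longleftrightarrow> (\<exists>z\<in>cycles A \<Delta> k. z \<notin> boundaries A \<Delta> k \<and>
     cycles A \<Delta> k = {(\<lambda>x. c * z x + b x) | c b. b \<in> boundaries A \<Delta> k})"

definition acyclic_cx :: "'a::field itself \<Rightarrow> 'v::linorder set set \<Rightarrow> bool" where
  "acyclic_cx A \<Delta> \<longleftrightarrow> (\<forall>k. red_hom_trivial A \<Delta> k)"

definition sphere_homology :: "'a::field itself \<Rightarrow> 'v::linorder set set \<Rightarrow> int \<Rightarrow> bool" where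
  "sphere_homology A \<Delta> m \<longleftrightarrow> red_hom_is_field A \<Delta> m \<and> (\<forall>k. k \<noteq> m \<longrightarrow> red_hom_trivial A \<Delta> k)"

definition homology_sphere :: "'a::field itself \<Rightarrow> 'v::linorder set set \<Rightarrow> int \<Rightarrow> bool" where
  "homology_sphere A S d \<longleftrightarrow> simplicial_complex S \<and> has_dim S d \<and>
     (\<forall>\<sigma>\<in>S. sphere_homology A (link S \<sigma>) (d - fdim \<sigma> - 1))"

definition ball_boundary :: "'a::field itself \<Rightarrow> 'v::linorder set set \<Rightarrow> int \<Rightarrow> 'v set set" where
  "ball_boundary A B d = {\<sigma>\<in>B. -1 < fdim \<sigma> \<and> fdim \<sigma> < d \<and>
      red_hom_trivial A (link B \<sigma>) (d - fdim \<sigma> - 1)} \<union> {{}}"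

definition homology_ball :: "'a::field itself \<Rightarrow> 'v::linorder set set \<Rightarrow> int \<Rightarrow> bool" where
  "homology_ball A B d \<longleftrightarrow> simplicial_complex B \<and> has_dim B d \<and>
     acyclic_cx A B \<and>
     (\<forall>\<sigma>\<in>B. fdim \<sigma> \<le> d - 1 \<longrightarrow>
        acyclic_cx A (link B \<sigma>) \<or> sphere_homology A (link B \<sigma>) (d - fdim \<sigma> - 1)) \<and>
     homology_sphere A (ball_boundary A B d) (d - 1)"

definition connected_rel :: "'v set set \<Rightarrow> ('v \<times> 'v) set" where
  "connected_rel \<Delta> = {(u, v). u \<in> vertices \<Delta> \<and> v \<in> vertices \<Delta> \<and>
      (\<lambda>x y. {x, y} \<in> \<Delta>)\<^sup>*\<^sup>* u v}"

definition num_components :: "'v set set \<Rightarrow> nat" where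
  "num_components \<Delta> = card (vertices \<Delta> // connected_rel \<Delta>)"

end

theory Submission
  imports Defs
begin

definition dc :: "'v set set \<Rightarrow> bool" where
  "dc \<Delta> \<longleftrightarrow> finite \<Delta> \<and> (\<forall>s\<in>\<Delta>. finite s) \<and> (\<forall>s\<in>\<Delta>. \<forall>t. t \<subseteq> s \<longrightarrow> t \<in> \<Delta>)"

lemma sc_dc: "simplicial_complex \<Delta> \<Longrightarrow> dc \<Delta>"
  by (auto simp: simplicial_complex_def dc_def)

lemma dc_finite: "dc \<Delta> \<Longrightarrow> finite \<Delta>" by (simp add: dc_def)
lemma dc_finite_el: "dc \<Delta> \<Longrightarrow> s \<in> \<Delta> \<Longrightarrow> finite s" by (simp add: dc_def)
lemma dc_down: "dc \<Delta> \<Longrightarrow> s \<in> \<Delta> \<Longrightarrow> t \<subseteq> s \<Longrightarrow> t \<in> \<Delta>" by (auto simp: dc_def)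

lemma finite_fod: "dc \<Delta> \<Longrightarrow> finite (faces_of_dim \<Delta> k)"
  by (auto simp: faces_of_dim_def dc_def)

lemma bm_add: "boundary_map \<Delta> k (\<lambda>x. f x + g x) = (\<lambda>x. boundary_map \<Delta> k f x + boundary_map \<Delta> k g x)"
  unfolding boundary_map_def by (auto simp: distrib_left sum.distrib)

lemma bm_diff: "boundary_map \<Delta> k (\<lambda>x. f x - g x) = (\<lambda>x. boundary_map \<Delta> k f x - boundary_map \<Delta> k g x)"
  unfolding boundary_map_def by (auto simp: right_diff_distrib sum_subtractf)

lemma bm_zero: "boundary_map \<Delta> k (\<lambda>_. 0) = (\<lambda>_. 0)"
  unfolding boundary_map_def by auto

lemma bm_sub:
  assumes "finite \<Delta>" "\<Delta>' \<subseteq> \<Delta>" "\<And>s t. s \<in> \<Delta>' \<Longrightarrow> t \<subseteq> s \<Longrightarrow> t \<in> \<Delta>'"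
    "\<And>s. s \<notin> faces_of_dim \<Delta>' k \<Longrightarrow> f s = 0"
  shows "boundary_map \<Delta> k f = boundary_map \<Delta>' k f"
proof
  fix \<tau>
  have fin: "finite {\<sigma> \<in> faces_of_dim \<Delta> k. \<tau> \<subseteq> \<sigma>}"
    using assms(1) by (auto simp: faces_of_dim_def)
  show "boundary_map \<Delta> k f \<tau> = boundary_map \<Delta>' k f \<tau>"
  proof (cases "\<tau> \<in> faces_of_dim \<Delta>' (k - 1)")
    case True
    then have T: "\<tau> \<in> faces_of_dim \<Delta> (k - 1)" using assms(2) by (auto simp: faces_of_dim_def)
    have "(\<Sum>\<sigma>\<in>{\<sigma> \<in> faces_of_dim \<Delta> k. \<tau> \<subseteq> \<sigma>}. incidence \<sigma> \<tau> * f \<sigma>)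
        = (\<Sum>\<sigma>\<in>{\<sigma> \<in> faces_of_dim \<Delta>' k. \<tau> \<subseteq> \<sigma>}. incidence \<sigma> \<tau> * f \<sigma>)"
      by (rule sum.mono_neutral_right[OF fin]) (use assms(2,4) in \<open>auto simp: faces_of_dim_def\<close>)
    then show ?thesis using True T by (simp add: boundary_map_def)
  next
    case False
    have "(\<Sum>\<sigma>\<in>{\<sigma> \<in> faces_of_dim \<Delta> k. \<tau> \<subseteq> \<sigma>}. incidence \<sigma> \<tau> * f \<sigma>) = 0"
      if T: "\<tau> \<in> faces_of_dim \<Delta> (k - 1)"
    proof (rule sum.neutral, rule ballI)
      fix \<sigma> assume s: "\<sigma> \<in> {\<sigma> \<in> faces_of_dim \<Delta> k. \<tau> \<subseteq> \<sigma>}"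
      show "incidence \<sigma> \<tau> * f \<sigma> = 0"
      proof (cases "f \<sigma> = 0")
        case False
        then have "\<sigma> \<in> faces_of_dim \<Delta>' k" using assms(4) by blast
        then have "\<sigma> \<in> \<Delta>'" by (simp add: faces_of_dim_def)
        then have "\<tau> \<in> \<Delta>'" using assms(3) s by blast
        then have "\<tau> \<in> faces_of_dim \<Delta>' (k - 1)" using T by (simp add: faces_of_dim_def)
        then show ?thesis using \<open>\<tau> \<notin> faces_of_dim \<Delta>' (k - 1)\<close> by blast
      qed simp
    qed
    then show ?thesis using False by (auto simp add: boundary_map_def)
  qed
qed

lemma inc_insert: "finite \<tau> \<Longrightarrow> q \<notin> \<tau> \<Longrightarrow> incidence (insert q \<tau>) \<tau> = (-1) ^ card {x\<in>\<tau>. x < q}"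
proof -
  assume "q \<notin> \<tau>"
  then have "insert q \<tau> - \<tau> = {q}" by auto
  then show ?thesis by (simp add: incidence_def)
qed

lemma card_lt_insert: "finite \<tau> \<Longrightarrow> q \<notin> \<tau> \<Longrightarrow>
   card {x \<in> insert q \<tau>. x < r} = card {x\<in>\<tau>. x < r} + (if q < r then 1 else 0)"
proof -
  assume f: "finite \<tau>" and q: "q \<notin> \<tau>"
  show ?thesis
  proof (cases "q < r")
    case True
    then have "{x \<in> insert q \<tau>. x < r} = insert q {x\<in>\<tau>. x < r}" by auto
    then show ?thesis using True f q by simp
  next
    case False
    then have "{x \<in> insert q \<tau>. x < r} = {x\<in>\<tau>. x < r}" by auto
    then show ?thesis using False by simp
  qed
qed

lemma inc_insert2: "finite \<tau> \<Longrightarrow> q \<notin> \<tau> \<Longrightarrow> r \<notin> \<tau> \<Longrightarrow> q \<noteq> r \<Longrightarrow>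
   incidence (insert q (insert r \<tau>)) (insert q \<tau>) = (-1) ^ (card {x\<in>\<tau>. x < r} + (if q < r then 1 else 0))"
proof -
  assume f: "finite \<tau>" and q: "q \<notin> \<tau>" and r: "r \<notin> \<tau>" and qr: "q \<noteq> r"
  have "insert q (insert r \<tau>) - insert q \<tau> = {r}" using r qr by auto
  then have "incidence (insert q (insert r \<tau>)) (insert q \<tau>) = ((-1) ^ card {x \<in> insert q \<tau>. x < r} :: 'b::field)"
    by (simp add: incidence_def)
  then show ?thesis using card_lt_insert[OF f q] by simp
qed

lemma sign_cancel:
  assumes f: "finite \<tau>" and q: "q \<notin> \<tau>" and r: "r \<notin> \<tau>" and qr: "q \<noteq> r"
  shows "incidence (insert q \<tau>) \<tau> * incidence (insert q (insert r \<tau>)) (insert q \<tau>)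
       + incidence (insert r \<tau>) \<tau> * incidence (insert q (insert r \<tau>)) (insert r \<tau>) = (0::'b::field)"
proof -
  have e: "insert q (insert r \<tau>) = insert r (insert q \<tau>)" by auto
  have A: "incidence (insert q (insert r \<tau>)) (insert q \<tau>) = ((-1) ^ (card {x\<in>\<tau>. x < r} + (if q < r then 1 else 0)) :: 'b::field)"
    by (rule inc_insert2[OF f q r qr])
  have B: "incidence (insert q (insert r \<tau>)) (insert r \<tau>) = ((-1) ^ (card {x\<in>\<tau>. x < q} + (if r < q then 1 else 0)) :: 'b::field)"
    unfolding e by (rule inc_insert2[OF f r q]) (use qr in auto)
  show ?thesis unfolding A B inc_insert[OF f q] inc_insert[OF f r]
    using qr by (cases "q < r") (auto simp: power_add)
qed

lemma two_more:
  assumes "finite \<sigma>" "\<tau> \<subseteq> \<sigma>" "card \<sigma> = card \<tau> + 2"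
  shows "\<exists>q r. q \<noteq> r \<and> q \<notin> \<tau> \<and> r \<notin> \<tau> \<and> \<sigma> = insert q (insert r \<tau>)"
proof -
  have "card (\<sigma> - \<tau>) = 2" using assms by (simp add: card_Diff_subset finite_subset)
  then obtain q r where "\<sigma> - \<tau> = {q, r}" "q \<noteq> r" by (auto simp: card_2_iff)
  then show ?thesis using assms(2) by (intro exI[of _ q] exI[of _ r]) auto
qed

lemma bm_bm:
  assumes dc: "dc \<Delta>"
  shows "boundary_map \<Delta> (k - 1) (boundary_map \<Delta> k f) = (\<lambda>_. (0::'b::field))"
proof
  fix \<tau>
  show "boundary_map \<Delta> (k - 1) (boundary_map \<Delta> k f) \<tau> = 0"
  proof (cases "\<tau> \<in> faces_of_dim \<Delta> (k - 1 - 1)")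
    case False then show ?thesis by (simp add: boundary_map_def)
  next
    case True
    define A where "A = {\<rho> \<in> faces_of_dim \<Delta> (k - 1). \<tau> \<subseteq> \<rho>}"
    define Bs where "Bs = {\<sigma> \<in> faces_of_dim \<Delta> k. \<tau> \<subseteq> \<sigma>}"
    have fA: "finite A" "finite Bs" using finite_fod[OF dc] by (auto simp: A_def Bs_def)
    have "boundary_map \<Delta> (k - 1) (boundary_map \<Delta> k f) \<tau>
        = (\<Sum>\<rho>\<in>A. incidence \<rho> \<tau> * (\<Sum>\<sigma>\<in>{\<sigma> \<in> faces_of_dim \<Delta> k. \<rho> \<subseteq> \<sigma>}. incidence \<sigma> \<rho> * f \<sigma>))"
      using True by (simp add: boundary_map_def A_def)
    also have "\<dots> = (\<Sum>\<rho>\<in>A. \<Sum>\<sigma>\<in>{\<sigma> \<in> Bs. \<rho> \<subseteq> \<sigma>}. incidence \<rho> \<tau> * incidence \<sigma> \<rho> * f \<sigma>)"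
    proof (rule sum.cong[OF refl])
      fix \<rho> assume "\<rho> \<in> A"
      then have "{\<sigma> \<in> faces_of_dim \<Delta> k. \<rho> \<subseteq> \<sigma>} = {\<sigma> \<in> Bs. \<rho> \<subseteq> \<sigma>}"
        by (auto simp: A_def Bs_def)
      then show "incidence \<rho> \<tau> * (\<Sum>\<sigma>\<in>{\<sigma> \<in> faces_of_dim \<Delta> k. \<rho> \<subseteq> \<sigma>}. incidence \<sigma> \<rho> * f \<sigma>)
          = (\<Sum>\<sigma>\<in>{\<sigma> \<in> Bs. \<rho> \<subseteq> \<sigma>}. incidence \<rho> \<tau> * incidence \<sigma> \<rho> * f \<sigma>)"
        by (simp add: sum_distrib_left mult.assoc)
    qed
    also have "\<dots> = (\<Sum>\<sigma>\<in>Bs. \<Sum>\<rho>\<in>{\<rho> \<in> A. \<rho> \<subseteq> \<sigma>}. incidence \<rho> \<tau> * incidence \<sigma> \<rho> * f \<sigma>)"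
      by (rule sum.swap_restrict[OF fA])
    also have "\<dots> = (\<Sum>\<sigma>\<in>Bs. 0)"
    proof (rule sum.cong[OF refl])
      fix \<sigma> assume s: "\<sigma> \<in> Bs"
      have fs: "finite \<sigma>" and sD: "\<sigma> \<in> \<Delta>" using s dc by (auto simp: Bs_def faces_of_dim_def dc_def)
      have ts: "\<tau> \<subseteq> \<sigma>" using s by (simp add: Bs_def)
      have ft: "finite \<tau>" using fs ts finite_subset by blast
      have cs: "int (card \<sigma>) = k + 1" and ct: "int (card \<tau>) = k - 1" using s True
        by (auto simp: Bs_def faces_of_dim_def fdim_def)
      then have "card \<sigma> = card \<tau> + 2" by linarith
      then obtain q r where qr: "q \<noteq> r" "q \<notin> \<tau>" "r \<notin> \<tau>" and se: "\<sigma> = insert q (insert r \<tau>)"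
        using two_more[OF fs ts] by blast
      have "{\<rho> \<in> A. \<rho> \<subseteq> \<sigma>} = {insert q \<tau>, insert r \<tau>}"
      proof (intro equalityI subsetI)
        fix \<rho> assume "\<rho> \<in> {\<rho> \<in> A. \<rho> \<subseteq> \<sigma>}"
        then have r1: "\<tau> \<subseteq> \<rho>" "\<rho> \<subseteq> \<sigma>" "int (card \<rho>) = k" by (auto simp: A_def faces_of_dim_def fdim_def)
        then have "card \<rho> = card \<tau> + 1" using ct by linarith
        moreover have "finite \<rho>" using r1 fs finite_subset by blast
        ultimately have "card (\<rho> - \<tau>) = 1" using r1 by (simp add: card_Diff_subset ft)
        then obtain x where x: "\<rho> - \<tau> = {x}" by (auto simp: card_1_singleton_iff)
        then have "\<rho> = insert x \<tau>" using r1 by auto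
        moreover have "x = q \<or> x = r" using x r1 se by auto
        ultimately show "\<rho> \<in> {insert q \<tau>, insert r \<tau>}" by auto
      next
        fix \<rho> assume "\<rho> \<in> {insert q \<tau>, insert r \<tau>}"
        moreover have "insert q \<tau> \<in> \<Delta>" "insert r \<tau> \<in> \<Delta>"
          using dc_down[OF dc sD] se by auto
        ultimately show "\<rho> \<in> {\<rho> \<in> A. \<rho> \<subseteq> \<sigma>}" using qr ct ft se
          by (auto simp: A_def faces_of_dim_def fdim_def)
      qed
      moreover have "insert q \<tau> \<noteq> insert r \<tau>" using qr by auto
      ultimately have "(\<Sum>\<rho>\<in>{\<rho> \<in> A. \<rho> \<subseteq> \<sigma>}. incidence \<rho> \<tau> * incidence \<sigma> \<rho> * f \<sigma>)
          = (incidence (insert q \<tau>) \<tau> * incidence \<sigma> (insert q \<tau>)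
             + incidence (insert r \<tau>) \<tau> * incidence \<sigma> (insert r \<tau>)) * f \<sigma>"
        by (simp add: algebra_simps)
      also have "\<dots> = 0" unfolding se by (simp only: sign_cancel[OF ft qr(2,3,1)] mult_zero_left)
      finally show "(\<Sum>\<rho>\<in>{\<rho> \<in> A. \<rho> \<subseteq> \<sigma>}. incidence \<rho> \<tau> * incidence \<sigma> \<rho> * f \<sigma>) = 0" .
    qed
    finally show ?thesis by simp
  qed
qed

definition ev :: "'v \<Rightarrow> 'v set \<Rightarrow> 'a::field" where
  "ev w s = (if s = {w} then 1 else 0)"

lemma fdim0: "fdim s = 0 \<longleftrightarrow> card s = 1" by (auto simp: fdim_def)
lemma fdim1: "fdim s = 1 \<longleftrightarrow> card s = 2" by (auto simp: fdim_def)
lemma fdimm1: "fdim s = -1 \<longleftrightarrow> card s = 0" by (auto simp: fdim_def)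

lemma inc_edge: "w \<noteq> v \<Longrightarrow> incidence {w, v} {v} = ((-1) ^ (if v < w then 1 else 0) :: 'b::field)"
proof -
  assume "w \<noteq> v"
  then have "{w, v} - {v} = {w}" by auto
  moreover have "{x \<in> {v}. x < w} = (if v < w then {v} else {})" by auto
  ultimately show ?thesis by (simp add: incidence_def)
qed

lemma inc_edge_neg: "w \<noteq> v \<Longrightarrow> incidence {w, v} {w} = - (incidence {w, v} {v} :: 'b::field)"
proof -
  assume wv: "w \<noteq> v"
  have "incidence {w, v} {w} = (incidence {v, w} {w} :: 'b)" by (simp add: insert_commute)
  also have "\<dots> = (-1) ^ (if w < v then 1 else 0)" using inc_edge wv by metis
  finally show ?thesis using inc_edge[OF wv, where 'b='b] wv by (cases "w < v") auto
qed

lemma inc_sq: "(incidence s t :: 'b::field) * incidence s t = 1"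
  by (simp add: incidence_def power_mult_distrib[symmetric] flip: power_add)

lemma bm_edge:
  assumes dc: "dc \<Delta>" and e: "{w, v} \<in> \<Delta>" and wv: "w \<noteq> v"
  shows "boundary_map \<Delta> 1 (\<lambda>t. if t = {w, v} then incidence {w, v} {v} else 0)
     = (\<lambda>s. ev v s - (ev w s :: 'b::field))"
proof
  fix s
  have eF: "{w, v} \<in> faces_of_dim \<Delta> 1" using e wv by (simp add: faces_of_dim_def fdim1)
  show "boundary_map \<Delta> 1 (\<lambda>t. if t = {w, v} then incidence {w, v} {v} else 0) s = ev v s - (ev w s :: 'b)"
  proof (cases "s \<in> faces_of_dim \<Delta> 0")
    case True
    have "(\<Sum>\<sigma>\<in>{\<sigma> \<in> faces_of_dim \<Delta> 1. s \<subseteq> \<sigma>}. incidence \<sigma> s * (if \<sigma> = {w, v} then incidence {w, v} {v} else (0::'b)))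
        = (\<Sum>\<sigma>\<in>{\<sigma> \<in> faces_of_dim \<Delta> 1. s \<subseteq> \<sigma>}. if {w, v} = \<sigma> then incidence {w, v} s * incidence {w, v} {v} else 0)"
      by (rule sum.cong) auto
    also have "\<dots> = (if {w, v} \<in> {\<sigma> \<in> faces_of_dim \<Delta> 1. s \<subseteq> \<sigma>} then incidence {w, v} s * incidence {w, v} {v} else 0)"
      by (rule sum.delta') (use finite_fod[OF dc] in simp)
    also have "\<dots> = (if s \<subseteq> {w, v} then incidence {w, v} s * incidence {w, v} {v} else 0)"
      using eF by simp
    also have "\<dots> = ev v s - ev w s"
    proof -
      obtain x where sx: "s = {x}" using True by (auto simp: faces_of_dim_def fdim0 card_1_singleton_iff)
      have sq: "incidence {w, v} {v} * incidence {w, v} {v} = (1::'b)" by (rule inc_sq)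
      have ng: "incidence {w, v} {w} = - (incidence {w, v} {v} :: 'b)" by (rule inc_edge_neg[OF wv])
      consider "x = v" | "x = w" | "x \<noteq> v \<and> x \<noteq> w" by blast
      then show ?thesis
      proof cases
        case 1 then show ?thesis using sq wv by (simp add: sx ev_def)
      next
        case 2 then show ?thesis using sq wv ng by (simp add: sx ev_def)
      next
        case 3 then show ?thesis by (simp add: sx ev_def)
      qed
    qed
    finally show ?thesis using True by (simp add: boundary_map_def)
  next
    case False
    have "{v} \<in> \<Delta>" "{w} \<in> \<Delta>" using dc_down[OF dc e] by auto
    then have "{v} \<in> faces_of_dim \<Delta> 0" "{w} \<in> faces_of_dim \<Delta> 0" by (auto simp: faces_of_dim_def fdim0)
    then have "s \<noteq> {v}" "s \<noteq> {w}" using False by auto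
    then show ?thesis using False by (simp add: boundary_map_def ev_def)
  qed
qed

lemma bm_ev0:
  assumes dc: "dc \<Delta>" and u: "{u} \<in> \<Delta>" and v: "{v} \<in> \<Delta>"
  shows "boundary_map \<Delta> 0 (\<lambda>s. ev v s - (ev u s :: 'b::field)) = (\<lambda>_. 0)"
proof
  fix \<tau>
  show "boundary_map \<Delta> 0 (\<lambda>s. ev v s - (ev u s :: 'b::field)) \<tau> = 0"
  proof (cases "\<tau> \<in> faces_of_dim \<Delta> (0 - 1)")
    case True
    then have t: "\<tau> = {}" using dc by (auto simp: faces_of_dim_def fdimm1 dc_def)
    have inc1: "incidence \<sigma> {} = (1::'b)" for \<sigma> by (simp add: incidence_def)
    have "{\<sigma> \<in> faces_of_dim \<Delta> 0. \<tau> \<subseteq> \<sigma>} = faces_of_dim \<Delta> 0" using t by auto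
    moreover have "{u} \<in> faces_of_dim \<Delta> 0" "{v} \<in> faces_of_dim \<Delta> 0" using u v
      by (auto simp: faces_of_dim_def fdim0)
    ultimately show ?thesis using True t finite_fod[OF dc, of 0]
      by (simp add: boundary_map_def inc1 sum_subtractf ev_def sum.delta')
  qed (simp add: boundary_map_def)
qed

definition edges_rel :: "'v set set \<Rightarrow> 'v \<Rightarrow> 'v \<Rightarrow> bool" where
  "edges_rel \<Delta> x y \<longleftrightarrow> {x, y} \<in> \<Delta>"

lemma walk_chain:
  assumes dc: "dc \<Delta>" and p: "(edges_rel \<Delta>)\<^sup>*\<^sup>* u v"
  shows "\<exists>c. (\<forall>s. s \<notin> faces_of_dim \<Delta> 1 \<longrightarrow> c s = 0) \<and>
     boundary_map \<Delta> 1 c = (\<lambda>s. ev v s - (ev u s :: 'b::field))"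
  using p
proof (induction rule: rtranclp_induct)
  case base
  show ?case by (rule exI[of _ "\<lambda>_. 0"]) (simp add: bm_zero)
next
  case (step w v)
  then obtain c where c: "\<forall>s. s \<notin> faces_of_dim \<Delta> 1 \<longrightarrow> c s = 0"
    "boundary_map \<Delta> 1 c = (\<lambda>s. ev w s - (ev u s :: 'b::field))" by blast
  show ?case
  proof (cases "w = v")
    case True then show ?thesis using c by blast
  next
    case False
    have e: "{w, v} \<in> \<Delta>" using step(2) by (simp add: edges_rel_def)
    define c' where "c' = (\<lambda>s. c s + (if s = {w, v} then incidence {w, v} {v} else (0::'b)))"
    have "boundary_map \<Delta> 1 c' = (\<lambda>s. ev v s - ev u s)"
      unfolding c'_def bm_add bm_edge[OF dc e False] c(2) by auto
    moreover have "\<forall>s. s \<notin> faces_of_dim \<Delta> 1 \<longrightarrow> c' s = 0"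
      using c(1) e False by (auto simp: c'_def faces_of_dim_def fdim1)
    ultimately show ?thesis by blast
  qed
qed

lemma conn_from_chain:
  assumes dc: "dc \<Delta>" and r: "\<forall>s. s \<notin> faces_of_dim \<Delta> 1 \<longrightarrow> r s = 0"
    and br: "boundary_map \<Delta> 1 r = (\<lambda>s. ev v s - (ev u s :: 'b::field))"
    and u: "{u} \<in> \<Delta>"
  shows "(edges_rel \<Delta>)\<^sup>*\<^sup>* u v"
proof (rule ccontr)
  assume nc: "\<not> (edges_rel \<Delta>)\<^sup>*\<^sup>* u v"
  let ?R = "edges_rel \<Delta>"
  define S0 where "S0 = {\<tau> \<in> faces_of_dim \<Delta> 0. \<exists>w. \<tau> = {w} \<and> ?R\<^sup>*\<^sup>* u w}"
  have fS: "finite S0" using finite_fod[OF dc] by (simp add: S0_def)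
  have F1: "finite (faces_of_dim \<Delta> 1)" using finite_fod[OF dc] .
  have uS: "{u} \<in> S0" using u by (auto simp: S0_def faces_of_dim_def fdim0)
  have vS: "{v} \<notin> S0" using nc by (auto simp: S0_def)
  have "(\<Sum>\<tau>\<in>S0. boundary_map \<Delta> 1 r \<tau>) = (\<Sum>\<tau>\<in>S0. ev v \<tau> - ev u \<tau>)" by (simp add: br)
  also have "\<dots> = - 1" using uS vS fS by (simp add: sum_subtractf ev_def sum.delta')
  finally have L: "(\<Sum>\<tau>\<in>S0. boundary_map \<Delta> 1 r \<tau>) = - 1" .
  have "(\<Sum>\<tau>\<in>S0. boundary_map \<Delta> 1 r \<tau>)
      = (\<Sum>\<tau>\<in>S0. \<Sum>e\<in>{e \<in> faces_of_dim \<Delta> 1. \<tau> \<subseteq> e}. incidence e \<tau> * r e)"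
    by (rule sum.cong) (auto simp: boundary_map_def S0_def)
  also have "\<dots> = (\<Sum>e\<in>faces_of_dim \<Delta> 1. \<Sum>\<tau>\<in>{\<tau> \<in> S0. \<tau> \<subseteq> e}. incidence e \<tau> * r e)"
    by (rule sum.swap_restrict[OF fS F1])
  also have "\<dots> = (\<Sum>e\<in>faces_of_dim \<Delta> 1. 0)"
  proof (rule sum.cong[OF refl])
    fix e assume eF: "e \<in> faces_of_dim \<Delta> 1"
    then obtain p q where pq: "e = {p, q}" "p \<noteq> q" "e \<in> \<Delta>"
      by (auto simp: faces_of_dim_def fdim1 card_2_iff)
    have Rpq: "?R p q" "?R q p" using pq by (auto simp: edges_rel_def insert_commute)
    have pF: "{p} \<in> faces_of_dim \<Delta> 0" "{q} \<in> faces_of_dim \<Delta> 0"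
      using dc_down[OF dc pq(3)] pq(1) by (auto simp: faces_of_dim_def fdim0)
    have sub: "\<tau> \<subseteq> {p, q} \<Longrightarrow> \<tau> \<in> faces_of_dim \<Delta> 0 \<Longrightarrow> \<tau> = {p} \<or> \<tau> = {q}" for \<tau>
      by (auto simp: faces_of_dim_def fdim0 card_1_singleton_iff)
    show "(\<Sum>\<tau>\<in>{\<tau> \<in> S0. \<tau> \<subseteq> e}. incidence e \<tau> * r e) = 0"
    proof (cases "?R\<^sup>*\<^sup>* u p")
      case True
      then have "?R\<^sup>*\<^sup>* u q" using Rpq by (meson rtranclp.rtrancl_into_rtrancl)
      then have "{\<tau> \<in> S0. \<tau> \<subseteq> e} = {{p}, {q}}" using True pF sub pq(1)
        by (auto simp: S0_def)
      then show ?thesis using pq inc_edge_neg[OF pq(2), where 'b='b]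
        by (simp add: algebra_simps)
    next
      case False
      then have "\<not> ?R\<^sup>*\<^sup>* u q" using Rpq by (meson rtranclp.rtrancl_into_rtrancl)
      then have E: "{\<tau> \<in> S0. \<tau> \<subseteq> e} = {}" using False sub pq(1)
        by (auto simp: S0_def)
      show ?thesis by (simp only: E sum.empty)
    qed
  qed
  finally have "(\<Sum>\<tau>\<in>S0. boundary_map \<Delta> 1 r \<tau>) = 0" by simp
  with L show False by simp
qed

lemma H0_conn:
  fixes A :: "'b::field itself"
  assumes dc: "dc \<Delta>" and h: "red_hom_trivial A \<Delta> 0" and u: "{u} \<in> \<Delta>" and v: "{v} \<in> \<Delta>"
  shows "(edges_rel \<Delta>)\<^sup>*\<^sup>* u v"
proof -
  define f where "f = (\<lambda>s. ev v s - (ev u s :: 'b))"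
  have "f \<in> chains A \<Delta> 0" using u v by (auto simp: chains_def f_def ev_def faces_of_dim_def fdim0)
  moreover have "boundary_map \<Delta> 0 f = (\<lambda>_. 0)" unfolding f_def by (rule bm_ev0[OF dc u v])
  ultimately have "f \<in> cycles A \<Delta> 0" by (simp add: cycles_def)
  then have "f \<in> boundaries A \<Delta> 0" using h by (simp add: red_hom_trivial_def)
  then obtain g where g: "g \<in> chains A \<Delta> 1" "f = boundary_map \<Delta> 1 g"
    by (auto simp: boundaries_def)
  show ?thesis
    by (rule conn_from_chain[OF dc _ _ u, of g]) (use g in \<open>auto simp: chains_def f_def\<close>)
qed

definition H1zero :: "'a::field itself \<Rightarrow> 'v::linorder set set \<Rightarrow> bool" where
  "H1zero A K \<longleftrightarrow> cycles A K 1 \<subseteq> boundaries A K 1"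

lemma dc_D: "dc K \<Longrightarrow> dc {s\<in>K. y \<notin> s}"
  by (auto simp: dc_def)

lemma dc_I: "dc K \<Longrightarrow> dc {s. y \<notin> s \<and> insert y s \<in> K}"
proof -
  assume dc: "dc K"
  have ins: "\<And>s t. insert y s \<in> K \<Longrightarrow> t \<subseteq> s \<Longrightarrow> insert y t \<in> K"
    using dc_down[OF dc] by (meson insert_mono)
  have sub: "{s. y \<notin> s \<and> insert y s \<in> K} \<subseteq> K" using dc_down[OF dc] by blast
  have A: "finite {s. y \<notin> s \<and> insert y s \<in> K}" using sub dc_finite[OF dc] finite_subset by blast
  have B: "\<forall>s\<in>{s. y \<notin> s \<and> insert y s \<in> K}. finite s" using sub dc by (auto simp: dc_def)
  have C: "\<forall>s\<in>{s. y \<notin> s \<and> insert y s \<in> K}. \<forall>t. t \<subseteq> s \<longrightarrow> t \<in> {s. y \<notin> s \<and> insert y s \<in> K}"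
    using ins by blast
  show ?thesis unfolding dc_def using A B C by blast
qed

lemma S1: "y \<in> e \<Longrightarrow> boundary_map K 2 (\<lambda>s. if y \<in> s then 0 else g s) e = 0"
  unfolding boundary_map_def by (auto intro!: sum.neutral)

lemma S2: assumes "dc K" "y \<notin> e" "insert y e \<notin> K"
  shows "boundary_map K 2 (\<lambda>s. if y \<in> s then g s else 0) e = 0"
proof -
  have "\<And>\<sigma>. \<sigma> \<in> faces_of_dim K 2 \<Longrightarrow> e \<subseteq> \<sigma> \<Longrightarrow> y \<in> \<sigma> \<Longrightarrow> False"
  proof -
    fix \<sigma> assume "\<sigma> \<in> faces_of_dim K 2" "e \<subseteq> \<sigma>" "y \<in> \<sigma>"
    then have "insert y e \<in> K" using dc_down[OF assms(1)] by (auto simp: faces_of_dim_def)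
    then show False using assms by simp
  qed
  then have N: "\<forall>\<sigma>\<in>{\<sigma> \<in> faces_of_dim K 2. e \<subseteq> \<sigma>}. incidence \<sigma> e * (if y \<in> \<sigma> then g \<sigma> else 0) = 0"
    by auto
  show ?thesis unfolding boundary_map_def using sum.neutral[OF N] by simp
qed

lemma split_g: "boundary_map K 2 g = (\<lambda>e. boundary_map K 2 (\<lambda>s. if y \<in> s then 0 else g s) e
   + boundary_map K 2 (\<lambda>s. if y \<in> s then g s else 0) e)"
proof -
  have "g = (\<lambda>s. (if y \<in> s then 0 else g s) + (if y \<in> s then g s else 0))" by auto
  then show ?thesis by (metis (no_types) bm_add)
qed

lemma L2:
  fixes A :: "'b::field itself"
  assumes dc: "dc K" and hK: "H1zero A K" and hI: "H1zero A {s. y \<notin> s \<and> insert y s \<in> K}"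
  shows "H1zero A {s\<in>K. y \<notin> s}"
  unfolding H1zero_def
proof
  let ?D = "{s\<in>K. y \<notin> s}" and ?I = "{s. y \<notin> s \<and> insert y s \<in> K}"
  fix z assume z: "z \<in> cycles A ?D 1"
  have dD: "dc ?D" and dI: "dc ?I" using dc_D[OF dc] dc_I[OF dc] .
  have fK: "finite K" using dc_finite[OF dc] .
  have zc: "\<And>s. s \<notin> faces_of_dim ?D 1 \<Longrightarrow> z s = 0" using z by (auto simp: cycles_def chains_def)
  have zK: "boundary_map K 1 z = boundary_map ?D 1 z"
    by (rule bm_sub[OF fK _ _ zc]) (use dc_down[OF dc] in auto)
  have "z \<in> cycles A K 1" using z zc zK
    by (auto simp: cycles_def chains_def faces_of_dim_def)
  then have "z \<in> boundaries A K 1" using hK by (auto simp: H1zero_def)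
  then obtain g where g: "g \<in> chains A K 2" "z = boundary_map K 2 g"
    by (auto simp: boundaries_def)
  define g1 where "g1 = (\<lambda>s. if y \<in> s then 0 else g s)"
  define g2 where "g2 = (\<lambda>s. if y \<in> s then g s else 0)"
  define c where "c = (\<lambda>e. z e - boundary_map K 2 g1 e)"
  have c2: "c = boundary_map K 2 g2" using g(2) split_g[of K g y] by (auto simp: c_def g1_def g2_def)
  have cI: "\<And>s. s \<notin> faces_of_dim ?I 1 \<Longrightarrow> c s = 0"
  proof -
    fix s assume s: "s \<notin> faces_of_dim ?I 1"
    show "c s = 0"
    proof (cases "s \<in> faces_of_dim K 1")
      case False
      then have "s \<notin> faces_of_dim ?D 1" by (auto simp: faces_of_dim_def)
      then show ?thesis using False zc by (simp add: c_def boundary_map_def)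
    next
      case True
      show ?thesis
      proof (cases "y \<in> s")
        case True
        then have "s \<notin> faces_of_dim ?D 1" by (auto simp: faces_of_dim_def)
        then show ?thesis using True zc S1[OF True] by (simp add: c_def g1_def)
      next
        case False
        then have "insert y s \<notin> K" using s \<open>s \<in> faces_of_dim K 1\<close> by (auto simp: faces_of_dim_def)
        then show ?thesis using S2[OF dc False] by (simp add: c2 g2_def)
      qed
    qed
  qed
  have g1D: "\<And>s. s \<notin> faces_of_dim ?D 2 \<Longrightarrow> g1 s = 0"
    using g(1) by (auto simp: g1_def chains_def faces_of_dim_def)
  have bbK: "boundary_map K 1 c = (\<lambda>_. 0)"
    unfolding c_def bm_diff zK using z bm_bm[OF dc, of 2 g1] by (simp add: cycles_def)
  have cIc: "boundary_map ?I 1 c = boundary_map K 1 c"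
    by (rule bm_sub[OF fK _ _ cI, symmetric]) (use dc_down[OF dc] in \<open>auto dest: insert_mono[of _ _ y]\<close>)
  have "c \<in> cycles A ?I 1" using cI cIc bbK by (auto simp: cycles_def chains_def)
  then have "c \<in> boundaries A ?I 1" using hI by (auto simp: H1zero_def)
  then obtain h where h: "h \<in> chains A ?I 2" "c = boundary_map ?I 2 h"
    by (auto simp: boundaries_def)
  have hI': "\<And>s. s \<notin> faces_of_dim ?I 2 \<Longrightarrow> h s = 0" using h(1) by (simp add: chains_def)
  have hD': "\<And>s. s \<notin> faces_of_dim ?D 2 \<Longrightarrow> h s = 0"
    using hI' dc_down[OF dc] by (auto simp: faces_of_dim_def)
  have fD: "finite ?D" using dc_finite[OF dD] .
  have hID: "boundary_map ?I 2 h = boundary_map ?D 2 h"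
    by (rule bm_sub[OF fD _ _ hI', symmetric]) (use dc_down[OF dc] in \<open>auto dest: insert_mono[of _ _ y]\<close>)
  have g1KD: "boundary_map K 2 g1 = boundary_map ?D 2 g1"
    by (rule bm_sub[OF fK _ _ g1D]) (use dc_down[OF dc] in auto)
  have ce: "\<And>e. z e = boundary_map K 2 g1 e + boundary_map ?I 2 h e"
    using fun_cong[OF h(2)] by (simp add: c_def algebra_simps)
  have zz: "z = boundary_map ?D 2 (\<lambda>s. g1 s + h s)"
    unfolding bm_add by (rule ext) (simp only: ce hID g1KD)
  have cc: "(\<lambda>s. g1 s + h s) \<in> chains A ?D 2" using g1D hD' by (simp add: chains_def)
  have bdef: "boundaries A ?D 1 = boundary_map ?D 2 ` chains A ?D 2" by (simp add: boundaries_def)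
  show "z \<in> boundaries A ?D 1" unfolding bdef by (subst zz) (rule imageI[OF cc])
qed

lemma L1:
  fixes A :: "'b::field itself"
  assumes dc: "dc K" and hK: "H1zero A K" and au: "{u, y} \<in> K" and av: "{v, y} \<in> K"
    and uy: "u \<noteq> y" and vy: "v \<noteq> y"
    and pth: "(edges_rel {s\<in>K. y \<notin> s})\<^sup>*\<^sup>* u v"
  shows "(edges_rel {s. y \<notin> s \<and> insert y s \<in> K})\<^sup>*\<^sup>* u v"
proof -
  let ?D = "{s\<in>K. y \<notin> s}" and ?I = "{s. y \<notin> s \<and> insert y s \<in> K}"
  have dD: "dc ?D" and dI: "dc ?I" using dc_D[OF dc] dc_I[OF dc] .
  have fK: "finite K" using dc_finite[OF dc] .
  obtain p where p: "\<forall>s. s \<notin> faces_of_dim ?D 1 \<longrightarrow> p s = 0"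
    "boundary_map ?D 1 p = (\<lambda>s. ev v s - (ev u s :: 'b))"
    using walk_chain[OF dD pth, where 'b='b] by blast
  have pK: "boundary_map K 1 p = boundary_map ?D 1 p"
    by (rule bm_sub[OF fK]) (use dc_down[OF dc] p(1) in auto)
  have ayu: "{y, u} \<in> K" using au by (simp add: insert_commute)
  define q where "q = (\<lambda>s. (if s = {v, y} then incidence {v, y} {y} else 0)
     + (if s = {y, u} then incidence {y, u} {u} else (0::'b)))"
  have bq: "boundary_map K 1 q = (\<lambda>s. ev u s - ev v s)"
    unfolding q_def bm_add bm_edge[OF dc av vy] bm_edge[OF dc ayu uy[symmetric]] by auto
  define z where "z = (\<lambda>s. p s + q s)"
  have zc: "z \<in> chains A K 1"
    using p(1) au av uy vy dc_down[OF dc]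
    by (auto simp: z_def q_def chains_def faces_of_dim_def fdim1 insert_commute)
  have "boundary_map K 1 z = (\<lambda>_. 0)"
    unfolding z_def bm_add pK p(2) bq by auto
  then have "z \<in> cycles A K 1" using zc by (simp add: cycles_def)
  then have "z \<in> boundaries A K 1" using hK by (auto simp: H1zero_def)
  then obtain g where g: "g \<in> chains A K 2" "z = boundary_map K 2 g"
    by (auto simp: boundaries_def)
  define g1 where "g1 = (\<lambda>s. if y \<in> s then 0 else g s)"
  define g2 where "g2 = (\<lambda>s. if y \<in> s then g s else 0)"
  define r where "r = (\<lambda>e. p e - boundary_map K 2 g1 e)"
  have zsplit: "\<And>e. z e = boundary_map K 2 g1 e + boundary_map K 2 g2 e"
    using g(2) split_g[of K g y] by (simp add: g1_def g2_def)
  have rI: "\<And>s. s \<notin> faces_of_dim ?I 1 \<Longrightarrow> r s = 0"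
  proof -
    fix s assume s: "s \<notin> faces_of_dim ?I 1"
    show "r s = 0"
    proof (cases "s \<in> faces_of_dim K 1")
      case False
      then have "s \<notin> faces_of_dim ?D 1" by (auto simp: faces_of_dim_def)
      then show ?thesis using False p(1) by (simp add: r_def boundary_map_def)
    next
      case True
      show ?thesis
      proof (cases "y \<in> s")
        case True
        then have "s \<notin> faces_of_dim ?D 1" by (auto simp: faces_of_dim_def)
        then show ?thesis using True p(1) S1[OF True] by (simp add: r_def g1_def)
      next
        case False
        then have ns: "insert y s \<notin> K" using s \<open>s \<in> faces_of_dim K 1\<close> by (auto simp: faces_of_dim_def)
        have "q s = 0" using False by (auto simp: q_def)
        then have "r s = boundary_map K 2 g2 s" using zsplit[of s] by (simp add: r_def z_def)
        then show ?thesis using S2[OF dc False ns] by (simp add: g2_def)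
      qed
    qed
  qed
  have br: "boundary_map K 1 r = (\<lambda>s. ev v s - ev u s)"
    unfolding r_def bm_diff pK p(2) using bm_bm[OF dc, of 2 g1] by simp
  have rIK: "boundary_map ?I 1 r = boundary_map K 1 r"
    by (rule bm_sub[OF fK _ _ rI, symmetric]) (use dc_down[OF dc] in \<open>auto dest: insert_mono[of _ _ y]\<close>)
  have uI: "{u} \<in> ?I" using au uy by (auto simp: insert_commute)
  show ?thesis
    by (rule conn_from_chain[OF dI _ _ uI, of r]) (use rI rIK br in auto)
qed

definition Kc :: "'v set set \<Rightarrow> 'v set \<Rightarrow> 'v set \<Rightarrow> 'v set set" where
  "Kc B \<rho> U = {\<tau>. \<tau> \<inter> \<rho> = {} \<and> \<tau> \<inter> U = {} \<and> \<tau> \<union> \<rho> \<in> B}"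

lemma Kc_dc: assumes "simplicial_complex B" shows "dc (Kc B \<rho> U)"
proof -
  have fU: "finite (\<Union>B)" using assms by (auto simp: simplicial_complex_def)
  have sub: "Kc B \<rho> U \<subseteq> Pow (\<Union>B)" by (auto simp: Kc_def)
  have A: "finite (Kc B \<rho> U)" using finite_subset[OF sub] fU by simp
  have B: "\<forall>s\<in>Kc B \<rho> U. finite s" using sub fU finite_subset by blast
  have C: "\<forall>s\<in>Kc B \<rho> U. \<forall>t. t \<subseteq> s \<longrightarrow> t \<in> Kc B \<rho> U"
  proof (intro ballI allI impI)
    fix s t assume "s \<in> Kc B \<rho> U" "t \<subseteq> s"
    then show "t \<in> Kc B \<rho> U" using assms unfolding Kc_def simplicial_complex_def
      by (smt (verit, ccfv_threshold) Un_mono disjoint_iff mem_Collect_eq subset_iff)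
  qed
  show ?thesis unfolding dc_def using A B C by blast
qed

lemma Kc_del: "y \<notin> \<rho> \<Longrightarrow> {s \<in> Kc B \<rho> U. y \<notin> s} = Kc B \<rho> (insert y U)"
  by (auto simp: Kc_def)

lemma Kc_lk: "y \<notin> \<rho> \<Longrightarrow> y \<notin> U \<Longrightarrow> {s. y \<notin> s \<and> insert y s \<in> Kc B \<rho> U} = Kc B (insert y \<rho>) U"
  by (auto simp: Kc_def)

lemma link_Kc: "link B \<rho> = Kc B \<rho> {}"
proof (intro equalityI subsetI)
  fix x assume "x \<in> link B \<rho>"
  then show "x \<in> Kc B \<rho> {}" by (auto simp: link_def Kc_def Un_absorb2)
next
  fix x assume x: "x \<in> Kc B \<rho> {}"
  then have "x = (x \<union> \<rho>) - \<rho>" "x \<union> \<rho> \<in> B" by (auto simp: Kc_def)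
  then show "x \<in> link B \<rho>" unfolding link_def by blast
qed

lemma induced_Kc: assumes "simplicial_complex B" shows "induced B (vertices B - \<sigma>) = Kc B {} \<sigma>"
proof -
  have "\<alpha> \<in> B \<Longrightarrow> \<alpha> \<subseteq> vertices B" for \<alpha>
    using assms by (auto simp: simplicial_complex_def vertices_def)
  then show ?thesis by (auto simp: induced_def Kc_def)
qed

lemma rtranclp_eq_only: assumes "\<And>x y. R x y \<Longrightarrow> x = y" "R\<^sup>*\<^sup>* a b" shows "a = b"
  using assms(2) by (induction rule: rtranclp_induct) (auto dest: assms(1))

lemma edges_sym_rt: "(edges_rel K)\<^sup>*\<^sup>* x y \<Longrightarrow> (edges_rel K)\<^sup>*\<^sup>* y x"
proof (induction rule: rtranclp_induct)
  case base then show ?case by simp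
next
  case (step z y)
  then have "edges_rel K y z" by (simp add: edges_rel_def insert_commute)
  then show ?case using step(3) by (rule converse_rtranclp_into_rtranclp)
qed

lemma two_vertices:
  fixes A :: "'b::field itself" and L :: "'v::linorder set set"
  assumes dc: "dc L" and c1: "\<forall>s\<in>L. card s \<le> 1" and e: "{} \<in> L" and h: "red_hom_is_field A L 0"
  shows "\<exists>a b. a \<noteq> b \<and> {a} \<in> L \<and> {b} \<in> L \<and> (\<forall>w. {w} \<in> L \<longrightarrow> w = a \<or> w = b)"
proof -
  have F1: "faces_of_dim L 1 = {}" using c1 by (auto simp: faces_of_dim_def fdim1)
  have bz: "boundary_map L 1 g = (\<lambda>_. 0)" for g :: "'v set \<Rightarrow> 'b"
    unfolding boundary_map_def F1 by (rule ext) simp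
  have bd: "boundaries A L 0 = {\<lambda>_. 0}"
  proof -
    have "(\<lambda>_. 0::'b) \<in> chains A L 1" by (simp add: chains_def)
    then show ?thesis by (auto simp: boundaries_def bz)
  qed
  obtain z where z: "z \<in> cycles A L 0" "z \<notin> boundaries A L 0"
    and cyc: "cycles A L 0 = {(\<lambda>x. c * z x + b x) | c b. b \<in> boundaries A L 0}"
    using h by (auto simp: red_hom_is_field_def)
  have cyc': "f \<in> cycles A L 0 \<Longrightarrow> \<exists>c. \<forall>x. f x = c * z x" for f
    using cyc bd by auto
  have zc: "\<And>s. s \<notin> faces_of_dim L 0 \<Longrightarrow> z s = 0" using z(1) by (auto simp: cycles_def chains_def)
  have "z \<noteq> (\<lambda>_. 0)" using z(2) bd by auto
  then obtain s where s: "z s \<noteq> 0" by auto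
  then have "s \<in> faces_of_dim L 0" using zc by blast
  then obtain a where sa: "s = {a}" and aL: "{a} \<in> L" by (auto simp: faces_of_dim_def fdim0 card_1_singleton_iff)
  have inc1: "incidence \<sigma> {} = (1::'b)" for \<sigma> :: "'v set" by (simp add: incidence_def)
  have eF: "{} \<in> faces_of_dim L (0 - 1)" using e by (simp add: faces_of_dim_def fdim_def)
  have "boundary_map L 0 z {} = 0" using z(1) by (simp add: cycles_def)
  then have sum0: "(\<Sum>t\<in>faces_of_dim L 0. z t) = 0" using eF by (simp add: boundary_map_def inc1)
  have aF: "{a} \<in> faces_of_dim L 0" using aL by (simp add: faces_of_dim_def fdim0)
  have "\<exists>t\<in>faces_of_dim L 0 - {{a}}. z t \<noteq> 0"
  proof (rule ccontr)
    assume "\<not> ?thesis"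
    then have "(\<Sum>t\<in>faces_of_dim L 0 - {{a}}. z t) = 0" by (auto intro: sum.neutral)
    then have "(\<Sum>t\<in>faces_of_dim L 0. z t) = z {a}"
      using sum.remove[OF finite_fod[OF dc] aF, of z] by simp
    then show False using sum0 s sa by simp
  qed
  then obtain t where t: "t \<in> faces_of_dim L 0" "t \<noteq> {a}" by blast
  then obtain b where tb: "t = {b}" and bL: "{b} \<in> L" by (auto simp: faces_of_dim_def fdim0 card_1_singleton_iff)
  have ab: "a \<noteq> b" using t tb by auto
  have cy: "{u} \<in> L \<Longrightarrow> {v} \<in> L \<Longrightarrow> (\<lambda>s. ev v s - (ev u s :: 'b)) \<in> cycles A L 0" for u v
    using bm_ev0[OF dc, of u v] by (auto simp: cycles_def chains_def ev_def faces_of_dim_def fdim0)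
  have "w = a \<or> w = b" if wL: "{w} \<in> L" for w
  proof (rule ccontr)
    assume nw: "\<not> (w = a \<or> w = b)"
    obtain c1 where c1: "\<forall>x. ev a x - ev b x = c1 * z x" using cyc'[OF cy[OF bL aL]] by blast
    obtain c2 where c2: "\<forall>x. ev a x - ev w x = c2 * z x" using cyc'[OF cy[OF wL aL]] by blast
    have h1: "c1 * z {w} = 0" using c1[rule_format, of "{w}"] nw by (auto simp: ev_def)
    have h2: "c2 * z {w} = -1" using c2[rule_format, of "{w}"] nw by (auto simp: ev_def)
    then have "z {w} \<noteq> 0" by auto
    with h1 have "c1 = 0" by simp
    then show False using c1[rule_format, of "{a}"] ab by (auto simp: ev_def)
  qed
  then show ?thesis using ab aL bL by blast
qed

theorem lemma3p3:
  fixes F :: "'a::field itself"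
    and B :: "'v::linorder set set"
    and d :: int
    and \<sigma> :: "'v set"
  assumes "homology_ball F B d"
    and "\<sigma> \<in> B" and "fdim \<sigma> = d - 1"
    and "\<sigma> \<notin> ball_boundary F B d"
    and "{\<tau>. \<tau> \<subset> \<sigma>} \<subseteq> ball_boundary F B d"
  shows "num_components (induced B (vertices B - \<sigma>)) = 2"
proof -
  note ball = assms(1) and sB = assms(2) and fd = assms(3) and int = assms(4) and bd = assms(5)
  have scB: "simplicial_complex B" and hd: "has_dim B d" and acB: "acyclic_cx F B"
    and lkc: "\<And>\<rho>. \<rho> \<in> B \<Longrightarrow> fdim \<rho> \<le> d - 1 \<Longrightarrow>
        acyclic_cx F (link B \<rho>) \<or> sphere_homology F (link B \<rho>) (d - fdim \<rho> - 1)"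
    using ball by (auto simp: homology_ball_def)
  have dcB: "dc B" using sc_dc[OF scB] .
  have downB: "\<And>s t. s \<in> B \<Longrightarrow> t \<subseteq> s \<Longrightarrow> t \<in> B" using dc_down[OF dcB] by blast
  have fs: "finite \<sigma>" using dc_finite_el[OF dcB sB] .
  have sne: "\<sigma> \<noteq> {}" using int by (auto simp: ball_boundary_def)
  then have "card \<sigma> \<ge> 1" using fs by (simp add: Suc_le_eq card_gt_0_iff)
  then have d1: "d \<ge> 1" using fd by (simp add: fdim_def)
  have cs: "int (card \<sigma>) = d" using fd by (simp add: fdim_def)
  have dimB: "\<And>s. s \<in> B \<Longrightarrow> fdim s \<le> d" using hd by (simp add: has_dim_def)

  have acl: "acyclic_cx F (Kc B \<rho> {})" if r: "\<rho> \<subset> \<sigma>" for \<rho>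
  proof (cases "\<rho> = {}")
    case True
    have "Kc B {} {} = B" by (auto simp: Kc_def)
    then show ?thesis using acB True by simp
  next
    case False
    have rB: "\<rho> \<in> B" using downB[OF sB] r by blast
    have "\<rho> \<in> ball_boundary F B d" using bd r by blast
    then have rt: "red_hom_trivial F (link B \<rho>) (d - fdim \<rho> - 1)" using False
      by (auto simp: ball_boundary_def)
    have "card \<rho> < card \<sigma>" using r fs by (simp add: psubset_card_mono)
    then have "fdim \<rho> \<le> d - 1" using cs by (simp add: fdim_def)
    then have "acyclic_cx F (link B \<rho>) \<or> sphere_homology F (link B \<rho>) (d - fdim \<rho> - 1)"
      using lkc[OF rB] by blast
    moreover have "\<not> sphere_homology F (link B \<rho>) (d - fdim \<rho> - 1)"
      using rt by (auto simp: sphere_homology_def red_hom_is_field_def red_hom_trivial_def)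
    ultimately show ?thesis by (simp add: link_Kc)
  qed

  define L where "L = Kc B \<sigma> {}"
  have dcL: "dc L" unfolding L_def by (rule Kc_dc[OF scB])
  have eL: "{} \<in> L" using sB by (simp add: L_def Kc_def)
  have c1L: "\<forall>s\<in>L. card s \<le> 1"
  proof
    fix s assume s: "s \<in> L"
    then have su: "s \<union> \<sigma> \<in> B" and di: "s \<inter> \<sigma> = {}" by (auto simp: L_def Kc_def)
    have fsu: "finite (s \<union> \<sigma>)" using dc_finite_el[OF dcB su] .
    have "fdim (s \<union> \<sigma>) \<le> d" using dimB[OF su] .
    then have "int (card (s \<union> \<sigma>)) \<le> d + 1" by (simp add: fdim_def)
    moreover have "card (s \<union> \<sigma>) = card s + card \<sigma>" using fsu di by (simp add: card_Un_disjoint)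
    ultimately show "card s \<le> 1" using cs by simp
  qed
  have rf: "red_hom_is_field F L 0"
  proof -
    have "fdim \<sigma> \<le> d - 1" using fd by simp
    have nt: "\<not> red_hom_trivial F (link B \<sigma>) (d - fdim \<sigma> - 1)"
      using int sB d1 fd by (auto simp: ball_boundary_def)
    then have "\<not> acyclic_cx F (link B \<sigma>)" by (auto simp: acyclic_cx_def)
    then have "sphere_homology F (link B \<sigma>) (d - fdim \<sigma> - 1)" using lkc[OF sB] fd by force
    then show ?thesis using fd by (simp add: sphere_homology_def L_def link_Kc)
  qed
  obtain a b where ab: "a \<noteq> b" "{a} \<in> L" "{b} \<in> L" and onlyab: "\<And>w. {w} \<in> L \<Longrightarrow> w = a \<or> w = b"
    using two_vertices[OF dcL c1L eL rf] by blast
  have aS: "a \<notin> \<sigma>" "insert a \<sigma> \<in> B" using ab(2) by (auto simp: L_def Kc_def)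
  have bS: "b \<notin> \<sigma>" "insert b \<sigma> \<in> B" using ab(3) by (auto simp: L_def Kc_def)

  have H1: "\<forall>\<rho> U. \<rho> \<inter> U = {} \<longrightarrow> \<rho> \<union> U \<subset> \<sigma> \<longrightarrow> card U = n \<longrightarrow> H1zero F (Kc B \<rho> U)" for n
  proof (induction n)
    case 0
    show ?case
    proof (intro allI impI)
      fix \<rho> U assume h: "\<rho> \<inter> U = {}" "\<rho> \<union> U \<subset> \<sigma>" "card U = 0"
      have "finite U" using h(2) fs finite_subset by blast
      then have "U = {}" using h(3) by simp
      then have "acyclic_cx F (Kc B \<rho> U)" using acl h(2) by simp
      then show "H1zero F (Kc B \<rho> U)"
        by (simp add: acyclic_cx_def red_hom_trivial_def H1zero_def)
    qed
  next
    case (Suc n)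
    show ?case
    proof (intro allI impI)
      fix \<rho> U assume h: "\<rho> \<inter> U = {}" "\<rho> \<union> U \<subset> \<sigma>" "card U = Suc n"
      then obtain y U' where U: "U = insert y U'" "y \<notin> U'" "card U' = n"
        by (auto simp: card_Suc_eq)
      have yr: "y \<notin> \<rho>" using h(1) U by auto
      have hK: "H1zero F (Kc B \<rho> U')" using Suc.IH h U by auto
      have hI0: "H1zero F (Kc B (insert y \<rho>) U')" using Suc.IH h U by auto
      have hI: "H1zero F {s. y \<notin> s \<and> insert y s \<in> Kc B \<rho> U'}"
        using hI0 Kc_lk[OF yr U(2)] by simp
      have "H1zero F {s \<in> Kc B \<rho> U'. y \<notin> s}" by (rule L2[OF Kc_dc[OF scB] hK hI])
      then show "H1zero F (Kc B \<rho> U)" using Kc_del[OF yr] U(1) by simp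
    qed
  qed

  have sep: "\<forall>\<rho> U. \<rho> \<inter> U = {} \<longrightarrow> \<rho> \<union> U = \<sigma> \<longrightarrow> card U = n \<longrightarrow> \<not> (edges_rel (Kc B \<rho> U))\<^sup>*\<^sup>* a b" for n
  proof (induction n)
    case 0
    show ?case
    proof (intro allI impI)
      fix \<rho> U assume h: "\<rho> \<inter> U = {}" "\<rho> \<union> U = \<sigma>" "card U = 0"
      have "finite U" using h(2) fs by auto
      then have "U = {}" using h(3) by simp
      then have K: "Kc B \<rho> U = L" using h(2) by (simp add: L_def)
      have "\<And>x y. edges_rel L x y \<Longrightarrow> x = y"
      proof -
        fix x y assume "edges_rel L x y"
        then have "card {x, y} \<le> 1" using c1L by (auto simp: edges_rel_def)
        then show "x = y" by (cases "x = y") auto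
      qed
      then show "\<not> (edges_rel (Kc B \<rho> U))\<^sup>*\<^sup>* a b" using K ab(1) rtranclp_eq_only by metis
    qed
  next
    case (Suc n)
    show ?case
    proof (intro allI impI notI)
      fix \<rho> U assume h: "\<rho> \<inter> U = {}" "\<rho> \<union> U = \<sigma>" "card U = Suc n"
        and p: "(edges_rel (Kc B \<rho> U))\<^sup>*\<^sup>* a b"
      then obtain x U' where U: "U = insert x U'" "x \<notin> U'" "card U' = n"
        by (auto simp: card_Suc_eq)
      have xr: "x \<notin> \<rho>" using h(1) U by auto
      have xs: "x \<in> \<sigma>" using h(2) U by auto
      have sub: "\<rho> \<union> U' \<subset> \<sigma>" using h U xr by auto
      have hK: "H1zero F (Kc B \<rho> U')" using H1 h(1) U sub by auto
      have ax: "{a, x} \<in> Kc B \<rho> U'"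
      proof -
        have "{a, x} \<union> \<rho> \<subseteq> insert a \<sigma>" using xs h(2) by auto
        then have "{a, x} \<union> \<rho> \<in> B" using downB[OF aS(2)] by blast
        then show ?thesis using aS(1) xr U h(2) by (auto simp: Kc_def)
      qed
      have bx: "{b, x} \<in> Kc B \<rho> U'"
      proof -
        have "{b, x} \<union> \<rho> \<subseteq> insert b \<sigma>" using xs h(2) by auto
        then have "{b, x} \<union> \<rho> \<in> B" using downB[OF bS(2)] by blast
        then show ?thesis using bS(1) xr U h(2) by (auto simp: Kc_def)
      qed
      have p': "(edges_rel {s \<in> Kc B \<rho> U'. x \<notin> s})\<^sup>*\<^sup>* a b"
        using p Kc_del[OF xr, of B U'] U(1) by simp
      have "(edges_rel {s. x \<notin> s \<and> insert x s \<in> Kc B \<rho> U'})\<^sup>*\<^sup>* a b"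
        by (rule L1[OF Kc_dc[OF scB] hK ax bx _ _ p']) (use aS bS xs in auto)
      then have "(edges_rel (Kc B (insert x \<rho>) U'))\<^sup>*\<^sup>* a b" using Kc_lk[OF xr U(2)] by simp
      moreover have "insert x \<rho> \<inter> U' = {}" "insert x \<rho> \<union> U' = \<sigma>" using h U by auto
      ultimately show False using Suc.IH U(3) by blast
    qed
  qed

  have reach: "\<forall>\<rho>. \<rho> \<subseteq> \<sigma> \<longrightarrow> card (\<sigma> - \<rho>) = n \<longrightarrow> (\<forall>w. {w} \<in> Kc B \<rho> (\<sigma> - \<rho>) \<longrightarrow>
      (edges_rel (Kc B \<rho> (\<sigma> - \<rho>)))\<^sup>*\<^sup>* w a \<or> (edges_rel (Kc B \<rho> (\<sigma> - \<rho>)))\<^sup>*\<^sup>* w b)" for n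
  proof (induction n rule: less_induct)
    case (less n)
    show ?case
    proof (intro allI impI)
      fix \<rho> w assume r: "\<rho> \<subseteq> \<sigma>" and cn: "card (\<sigma> - \<rho>) = n" and w: "{w} \<in> Kc B \<rho> (\<sigma> - \<rho>)"
      let ?R = "edges_rel (Kc B \<rho> (\<sigma> - \<rho>))"
      show "?R\<^sup>*\<^sup>* w a \<or> ?R\<^sup>*\<^sup>* w b"
      proof (cases "\<rho> = \<sigma>")
        case True
        then have "{w} \<in> L" using w by (simp add: L_def)
        then show ?thesis using onlyab by blast
      next
        case False
        then have rs: "\<rho> \<subset> \<sigma>" using r by blast
        let ?R0 = "edges_rel (Kc B \<rho> {})"
        have "red_hom_trivial F (Kc B \<rho> {}) 0" using acl[OF rs] by (simp add: acyclic_cx_def)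
        moreover have wK: "{w} \<in> Kc B \<rho> {}" using w by (auto simp: Kc_def)
        moreover have aK: "{a} \<in> Kc B \<rho> {}"
        proof -
          have "{a} \<union> \<rho> \<subseteq> insert a \<sigma>" using r by auto
          then show ?thesis using downB[OF aS(2)] aS(1) r by (auto simp: Kc_def)
        qed
        ultimately have "?R0\<^sup>*\<^sup>* w a" using H0_conn[OF Kc_dc[OF scB]] by blast
        then show ?thesis using w
        proof (induction rule: converse_rtranclp_induct)
          case base
          then show ?case by simp
        next
          case (step w w')
          have ww: "{w, w'} \<in> Kc B \<rho> {}" using step(1) by (simp add: edges_rel_def)
          then have ww': "{w, w'} \<inter> \<rho> = {}" "{w, w'} \<union> \<rho> \<in> B" by (auto simp: Kc_def)
          have wns: "w \<notin> \<sigma>" using step(4) r by (auto simp: Kc_def)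
          show ?case
          proof (cases "w' \<in> \<sigma>")
            case True
            define \<rho>' where "\<rho>' = insert w' \<rho>"
            have w'r: "w' \<notin> \<rho>" using ww' by auto
            have r': "\<rho>' \<subseteq> \<sigma>" using True r by (simp add: \<rho>'_def)
            have lt: "card (\<sigma> - \<rho>') < n"
            proof -
              have "\<sigma> - \<rho>' \<subset> \<sigma> - \<rho>" using True w'r by (auto simp: \<rho>'_def)
              moreover have "finite (\<sigma> - \<rho>)" using fs by simp
              ultimately show ?thesis using cn psubset_card_mono by metis
            qed
            have wK': "{w} \<in> Kc B \<rho>' (\<sigma> - \<rho>')"
            proof -
              have "{w} \<union> \<rho>' = {w, w'} \<union> \<rho>" by (auto simp: \<rho>'_def)
              then show ?thesis using ww' wns r' step(4) by (auto simp: Kc_def \<rho>'_def)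
            qed
            have sub: "Kc B \<rho>' (\<sigma> - \<rho>') \<subseteq> Kc B \<rho> (\<sigma> - \<rho>)"
            proof
              fix \<tau> assume t: "\<tau> \<in> Kc B \<rho>' (\<sigma> - \<rho>')"
              then have "\<tau> \<union> \<rho> \<subseteq> \<tau> \<union> \<rho>'" "\<tau> \<union> \<rho>' \<in> B" by (auto simp: Kc_def \<rho>'_def)
              then have "\<tau> \<union> \<rho> \<in> B" using downB by blast
              then show "\<tau> \<in> Kc B \<rho> (\<sigma> - \<rho>)" using t by (auto simp: Kc_def \<rho>'_def)
            qed
            have mono: "edges_rel (Kc B \<rho>' (\<sigma> - \<rho>')) \<le> edges_rel (Kc B \<rho> (\<sigma> - \<rho>))"
              using sub by (auto simp: edges_rel_def)
            have "(edges_rel (Kc B \<rho>' (\<sigma> - \<rho>')))\<^sup>*\<^sup>* w a \<or> (edges_rel (Kc B \<rho>' (\<sigma> - \<rho>')))\<^sup>*\<^sup>* w b"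
              using less.IH[OF lt] r' wK' by blast
            then show ?thesis using rtranclp_mono[OF mono] by blast
          next
            case False
            have w'K: "{w'} \<in> Kc B \<rho> (\<sigma> - \<rho>)"
            proof -
              have "{w'} \<union> \<rho> \<subseteq> {w, w'} \<union> \<rho>" by auto
              then show ?thesis using downB[OF ww'(2)] ww'(1) False by (auto simp: Kc_def)
            qed
            have e: "edges_rel (Kc B \<rho> (\<sigma> - \<rho>)) w w'" using ww' wns False by (auto simp: Kc_def edges_rel_def)
            show ?thesis using step(3)[OF w'K] converse_rtranclp_into_rtranclp[of "edges_rel (Kc B \<rho> (\<sigma> - \<rho>))", OF e] by blast
          qed
        qed
      qed
    qed
  qed

  define Ac where "Ac = Kc B {} \<sigma>"
  have AI: "induced B (vertices B - \<sigma>) = Ac" using induced_Kc[OF scB] by (simp add: Ac_def)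
  let ?R = "edges_rel Ac"
  have rch: "\<And>w. {w} \<in> Ac \<Longrightarrow> ?R\<^sup>*\<^sup>* w a \<or> ?R\<^sup>*\<^sup>* w b"
  proof -
    fix w assume "{w} \<in> Ac"
    then show "?R\<^sup>*\<^sup>* w a \<or> ?R\<^sup>*\<^sup>* w b" using reach[of "card \<sigma>", rule_format, of "{}" w] by (simp add: Ac_def)
  qed
  have nab: "\<not> ?R\<^sup>*\<^sup>* a b" using sep[of "card \<sigma>"] by (simp add: Ac_def)
  have aA: "{a} \<in> Ac" using downB[OF aS(2)] aS(1) by (auto simp: Ac_def Kc_def)
  have bA: "{b} \<in> Ac" using downB[OF bS(2)] bS(1) by (auto simp: Ac_def Kc_def)
  have crel: "connected_rel Ac = {(u, v). u \<in> vertices Ac \<and> v \<in> vertices Ac \<and> ?R\<^sup>*\<^sup>* u v}"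
  proof -
    have "(\<lambda>x y. {x, y} \<in> Ac) = ?R" by (simp add: fun_eq_iff edges_rel_def)
    then show ?thesis by (simp add: connected_rel_def)
  qed
  define Cl where "Cl x = {v \<in> vertices Ac. ?R\<^sup>*\<^sup>* x v}" for x
  have q: "vertices Ac // connected_rel Ac = Cl ` vertices Ac"
    by (auto simp: quotient_def crel Cl_def)
  have same: "Cl w = Cl c" if "?R\<^sup>*\<^sup>* w c" for w c
    using that edges_sym_rt[OF that] by (auto simp: Cl_def intro: rtranclp_trans)
  have "Cl ` vertices Ac = {Cl a, Cl b}"
  proof (intro equalityI subsetI)
    fix X assume "X \<in> Cl ` vertices Ac"
    then obtain w where "w \<in> vertices Ac" "X = Cl w" by blast
    then show "X \<in> {Cl a, Cl b}" using rch same by (auto simp: vertices_def)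
  next
    fix X assume "X \<in> {Cl a, Cl b}"
    then show "X \<in> Cl ` vertices Ac" using aA bA by (auto simp: vertices_def)
  qed
  moreover have "Cl a \<noteq> Cl b"
  proof
    assume "Cl a = Cl b"
    moreover have "b \<in> Cl b" using bA by (simp add: Cl_def vertices_def)
    ultimately have "b \<in> Cl a" by simp
    then show False using nab by (simp add: Cl_def)
  qed
  ultimately show ?thesis unfolding num_components_def AI q by simp
qed

end
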